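(* Let $\alpha,\beta>-1$ and $n\in\mathbb{N}=\{1,2,\dots\}$, and let $t_1<\dots<t_n$ be the zeros of $P_n^{(\alpha,\beta)}$. Then $$\|p_n^{(\alpha,\beta)}\|_1=\int_{-1}^1|p_n^{(\alpha,\beta)}(t)|\,dt=\frac{4}{n+\alpha+\beta+1}\cdot\frac{n+\alpha+\beta}{2n+\alpha+\beta}\cdot\frac{2n+\alpha+\beta+1}{2n+\alpha+\beta-1}\sum_{m=1}^n(-1)^{m+n}p_{n-1}^{(\alpha,\beta)}(t_m).$$
   Context: The Jacobi polynomials are $P_n^{(\alpha,\beta)}(t)=\sum_{j=0}^n\frac{1}{2^n}\binom{n+\alpha}{n-j}\binom{n+\beta}{j}(t-1)^j(t+1)^{n-j}$. The Jacobi functions on $(-1,1)$ are $p_n^{(\alpha,\beta)}(t)=\frac{(2n+\alpha+\beta+1)\Gamma(n+\alpha+\beta+1)\,n!}{2^{\alpha+\beta+1}\Gamma(n+\alpha+1)\Gamma(n+\beta+1)}(1-t)^{\alpha}(1+t)^{\beta}P_n^{(\alpha,\beta)}(t)$. *)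

theory Defs
  imports "HOL-Analysis.Analysis"
begin

definition jacobiP :: "nat \<Rightarrow> real \<Rightarrow> real \<Rightarrow> real \<Rightarrow> real" where
  "jacobiP n a b t =
     (\<Sum>j=0..n. (1 / 2 ^ n) * ((real n + a) gchoose (n - j)) * ((real n + b) gchoose j)
                 * (t - 1) ^ j * (t + 1) ^ (n - j))"

definition jacobi_fun :: "nat \<Rightarrow> real \<Rightarrow> real \<Rightarrow> real \<Rightarrow> real" where
  "jacobi_fun n a b t =
     ((2 * real n + a + b + 1) * Gamma (real n + a + b + 1) * fact n
        / (2 powr (a + b + 1) * Gamma (real n + a + 1) * Gamma (real n + b + 1)))
     * (1 - t) powr a * (1 + t) powr b * jacobiP n a b t"

end

theory Submission
  imports Defs
begin


definition H :: "nat \<Rightarrow> (nat \<Rightarrow> real) \<Rightarrow> real \<Rightarrow> real \<Rightarrow> real" where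
  "H d c X Y = (\<Sum>k=0..d. c k * X^k * Y^(d-k))"

lemma HX: "X * H d c X Y = H (Suc d) (\<lambda>k. if k = 0 then 0 else c (k-1)) X Y"
  unfolding H_def
  by (subst sum.atLeast0_atMost_Suc_shift) (simp add: sum_distrib_left algebra_simps)

lemma HY: "Y * H d c X Y = H (Suc d) (\<lambda>k. if k \<le> d then c k else 0) X Y"
  unfolding H_def
  apply (subst sum.atLeast0_atMost_Suc)
  apply (simp add: sum_distrib_left)
  apply (rule sum.cong, simp)
  apply (simp add: Suc_diff_le algebra_simps)
  done

lemma Hadd: "H d c X Y + H d c' X Y = H d (\<lambda>k. c k + c' k) X Y"
  unfolding H_def by (simp add: sum.distrib algebra_simps)

lemma Hsmult: "r * H d c X Y = H d (\<lambda>k. r * c k) X Y"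
  unfolding H_def by (simp add: sum_distrib_left algebra_simps)

lemma Hcong: "(\<And>k. k \<le> d \<Longrightarrow> c k = c' k) \<Longrightarrow> H d c X Y = H d c' X Y"
  unfolding H_def by (intro sum.cong) auto

lemma Hdiff: "H d c X Y - H d c' X Y = H d (\<lambda>k. c k - c' k) X Y"
  unfolding H_def by (simp add: sum_subtractf algebra_simps)

definition jc :: "nat \<Rightarrow> real \<Rightarrow> real \<Rightarrow> nat \<Rightarrow> real" where
  "jc n a b k = ((real n + a) gchoose (n - k)) * ((real n + b) gchoose k)"

lemma jacobiP_H: "jacobiP n a b t = H n (jc n a b) ((t-1)/2) ((t+1)/2)"
  unfolding jacobiP_def H_def jc_def
proof (rule sum.cong)
  fix j assume "j \<in> {0..n}"
  then have "(2::real)^n = 2^j * 2^(n-j)" by (simp add: power_add[symmetric])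
  then show "1 / 2 ^ n * ((real n + a) gchoose (n - j)) * ((real n + b) gchoose j) * (t - 1) ^ j * (t + 1) ^ (n - j) =
         (real n + a gchoose n - j) * (real n + b gchoose j) * ((t - 1) / 2) ^ j * ((t + 1) / 2) ^ (n - j)"
    by (simp add: power_divide)
qed simp

lemma gch: "((x::real) - of_nat k) * (x gchoose k) = of_nat (Suc k) * (x gchoose Suc k)"
  using gbinomial_absorb_comp[of x k] gbinomial_absorption[of k x] by simp

lemma I1c:
  assumes "k \<le> Suc m"
  shows "(if k \<le> m then (a+1+real k)*jc m (a+1) (b+1) k else 0)
       + (if k=0 then 0 else (b+1+real(m-(k-1)))*jc m (a+1) (b+1) (k-1))
       = (real m + 1)*jc (Suc m) a b k"
proof (cases k)
  case 0
  have "(real m + (a+1) - real m) * (real m + (a+1) gchoose m) = real (Suc m) * (real m + (a+1) gchoose Suc m)"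
    by (rule gch)
  then show ?thesis using 0 by (simp add: jc_def algebra_simps)
next
  case (Suc j)
  show ?thesis
  proof (cases "j = m")
    case True
    have "(real m + (b+1) - real m) * (real m + (b+1) gchoose m) = real (Suc m) * (real m + (b+1) gchoose Suc m)"
      by (rule gch)
    then show ?thesis using Suc True by (simp add: jc_def algebra_simps)
  next
    case False
    with Suc assms have "k \<le> m" by auto
    then obtain i where i: "m = k + i" using le_iff_add by blast
    have e1: "(real m + (a+1) - real i) * (real m + (a+1) gchoose i) = real (Suc i) * (real m + (a+1) gchoose Suc i)"
      by (rule gch)
    have e2: "(real m + (b+1) - real j) * (real m + (b+1) gchoose j) = real (Suc j) * (real m + (b+1) gchoose Suc j)"
      by (rule gch)
    have mi: "m - k = i" "Suc m - k = Suc i" "m - j = Suc i" "m - (k-1) = Suc i" using i Suc by auto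
    have "(a+1+real k) = (real m + (a+1) - real i)" using i by simp
    moreover have "b+1+real(m-(k-1)) = (real m + (b+1) - real j)" using i Suc by simp
    ultimately have "(a+1+real k)*jc m (a+1) (b+1) k + (b+1+real(m-(k-1)))*jc m (a+1) (b+1) (k-1)
       = ((real m + (a+1) - real i) * (real m + (a+1) gchoose i)) * (real m + (b+1) gchoose k)
         + ((real m + (b+1) - real j) * (real m + (b+1) gchoose j)) * (real m + (a+1) gchoose Suc i)"
      unfolding jc_def mi using Suc by (simp only: diff_Suc_1 mult_ac)
    also have "\<dots> = real (Suc i) * (real m + (a+1) gchoose Suc i) * (real m + (b+1) gchoose k)
         + real (Suc j) * (real m + (b+1) gchoose Suc j) * (real m + (a+1) gchoose Suc i)"
      by (simp only: e1 e2)
    also have "\<dots> = (real m + 1)*jc (Suc m) a b k"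
      unfolding jc_def mi using Suc i by (simp add: algebra_simps)
    finally show ?thesis using Suc i by simp
  qed
qed

lemma I1:
  "(a+1)*Y*H m (jc m (a+1) (b+1)) X Y + (b+1)*X*H m (jc m (a+1) (b+1)) X Y
   + Y*H m (\<lambda>k. real k * jc m (a+1) (b+1) k) X Y + X*H m (\<lambda>k. real (m-k) * jc m (a+1) (b+1) k) X Y
   = (real m+1) * H (Suc m) (jc (Suc m) a b) X Y"
proof -
  have "(a+1)*Y*H m (jc m (a+1) (b+1)) X Y + (b+1)*X*H m (jc m (a+1) (b+1)) X Y
   + Y*H m (\<lambda>k. real k * jc m (a+1) (b+1) k) X Y + X*H m (\<lambda>k. real (m-k) * jc m (a+1) (b+1) k) X Y
   = Y*H m (\<lambda>k. (a+1+real k) * jc m (a+1) (b+1) k) X Y + X*H m (\<lambda>k. (b+1+real (m-k)) * jc m (a+1) (b+1) k) X Y"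
    by (simp add: Hsmult Hadd[symmetric] algebra_simps)
  also have "\<dots> = H (Suc m) (\<lambda>k. (if k \<le> m then (a+1+real k)*jc m (a+1) (b+1) k else 0)
       + (if k=0 then 0 else (b+1+real(m-(k-1)))*jc m (a+1) (b+1) (k-1))) X Y"
    by (simp only: HX HY Hadd)
  also have "\<dots> = H (Suc m) (\<lambda>k. (real m + 1)*jc (Suc m) a b k) X Y"
    by (rule Hcong) (rule I1c)
  finally show ?thesis by (simp add: Hsmult)
qed

lemma Bc:
  assumes "k \<le> Suc m"
  shows "(real m+a+b+2)*(if k \<le> m then jc m (a+1) (b+1) k else 0)
       = (real m+1)*jc (Suc m) a b k
       + (real m+1+b)*((if k \<le> m then jc m (a+1) b k else 0) - (if k=0 then 0 else jc m (a+1) b (k-1)))"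
proof -
  define NA where "NA = real m + (a+1)"
  define MB where "MB = real m + b"
  define MB1 where "MB1 = real m + (b+1)"
  have r: "real (Suc m) + a = NA" "real (Suc m) + b = MB1" "real m + (a+1) = NA" "real m + (b+1) = MB1"
     "real m + b = MB" "MB1 - 1 = MB"
    by (simp_all add: NA_def MB_def MB1_def)
  have jcs: "jc m (a+1) (b+1) k = (NA gchoose (m-k)) * (MB1 gchoose k)"
    "jc (Suc m) a b k = (NA gchoose (Suc m-k)) * (MB1 gchoose k)"
    "jc m (a+1) b k = (NA gchoose (m-k)) * (MB gchoose k)"
    "jc m (a+1) b (k-1) = (NA gchoose (m-(k-1))) * (MB gchoose (k-1))" for k
    unfolding jc_def r by simp_all
  show ?thesis
  proof (cases k)
    case 0
    have "(NA - real m) * (NA gchoose m) = real (Suc m) * (NA gchoose Suc m)" by (rule gch)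
    moreover have "NA - real m = a + 1" by (simp add: NA_def)
    ultimately show ?thesis using 0 unfolding jcs by (simp add: algebra_simps MB1_def)
  next
    case (Suc j)
    show ?thesis
    proof (cases "j = m")
      case True
      have "real (Suc m) * (MB1 gchoose Suc m) = MB1 * (MB gchoose m)"
        using gbinomial_absorption[of m MB1] r by simp
      then show ?thesis using Suc True unfolding jcs by (simp add: algebra_simps MB1_def)
    next
      case False
      with Suc assms have "k \<le> m" by auto
    then obtain i where i: "m = k + i" using le_iff_add by blast
      have mi: "m - k = i" "Suc m - k = Suc i" "m - j = Suc i" "m - (k-1) = Suc i" "k - 1 = j" using i Suc by auto
      define x where "x = NA gchoose i"
      define y where "y = NA gchoose Suc i"
      define V where "V = MB1 gchoose k"
      define c1 where "c1 = MB gchoose k"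
      define c2 where "c2 = MB gchoose j"
      have e1: "(NA - real i) * x = real (Suc i) * y" unfolding x_def y_def by (rule gch)
      have e2: "MB1 * c1 = (MB1 - real k) * V"
        using gbinomial_absorb_comp[of MB1 k] r unfolding c1_def V_def by simp
      have e3: "MB1 * c2 = real k * V"
        using gbinomial_absorption[of j MB1] r Suc unfolding c2_def V_def by simp
      have NAi: "NA - real i = a + 1 + real k" using i by (simp add: NA_def)
      have "(real m+1)*(y*V) + (real m+1+b)*(x*c1 - y*c2)
          = (real m+1)*(y*V) + x*(MB1*c1) - y*(MB1*c2)" by (simp add: MB1_def algebra_simps)
      also have "\<dots> = (real (Suc i) * y)*V + real k * y * V + x*((MB1 - real k) * V) - y*(real k * V)"
        unfolding e2 e3 using i by (simp add: algebra_simps)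
      also have "\<dots> = ((NA - real i) * x)*V + x*((MB1 - real k) * V)"
        unfolding e1 by (simp add: algebra_simps)
      also have "\<dots> = (real m+a+b+2)*(x*V)"
        unfolding NAi using i by (simp add: MB1_def algebra_simps)
      finally show ?thesis using Suc False i unfolding jcs mi x_def[symmetric] y_def[symmetric]
        V_def[symmetric] c1_def[symmetric] c2_def[symmetric] by (simp add: algebra_simps)
    qed
  qed
qed

lemma Ac:
  assumes "k \<le> Suc m" and "real m + 1 + b \<noteq> 0"
  shows "(real m+1)*jc (Suc m) a b k
       = (real m+1+a)*((if k \<le> m then jc m a b k else 0) - (if k=0 then 0 else jc m a b (k-1)))
       + (2*real m+2+a+b)*(if k=0 then 0 else jc m (a+1) b (k-1))"
proof -
  define NA where "NA = real m + (a+1)"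
  define NA' where "NA' = real m + a"
  define MB where "MB = real m + b"
  define MB1 where "MB1 = real m + (b+1)"
  have r: "real (Suc m) + a = NA" "real (Suc m) + b = MB1" "real m + (a+1) = NA" "real m + (b+1) = MB1"
     "real m + b = MB" "MB1 - 1 = MB" "NA - 1 = NA'" "real m + a = NA'"
    by (simp_all add: NA_def MB_def MB1_def NA'_def)
  have MB1nz: "MB1 \<noteq> 0" using assms(2) by (simp add: MB1_def algebra_simps)
  have jcs: "jc m a b k = (NA' gchoose (m-k)) * (MB gchoose k)"
    "jc (Suc m) a b k = (NA gchoose (Suc m-k)) * (MB1 gchoose k)"
    "jc m (a+1) b k = (NA gchoose (m-k)) * (MB gchoose k)"
    for k
    unfolding jc_def r by simp_all
  show ?thesis
  proof (cases k)
    case 0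
    have "real (Suc m) * (NA gchoose Suc m) = NA * (NA' gchoose m)"
      using gbinomial_absorption[of m NA] r by simp
    then show ?thesis using 0 unfolding jcs by (simp add: algebra_simps NA_def)
  next
    case (Suc j)
    show ?thesis
    proof (cases "j = m")
      case True
      have "real (Suc m) * (MB1 gchoose Suc m) = MB1 * (MB gchoose m)"
        using gbinomial_absorption[of m MB1] r by simp
      then show ?thesis using Suc True unfolding jcs by (simp add: algebra_simps MB1_def)
    next
      case False
      with Suc assms have "k \<le> m" by auto
    then obtain i where i: "m = k + i" using le_iff_add by blast
      have mi: "m - k = i" "Suc m - k = Suc i" "m - j = Suc i" "m - (k-1) = Suc i" "k - 1 = j" using i Suc by auto
      define y where "y = NA gchoose Suc i"
      define d1 where "d1 = NA' gchoose i"
      define d2 where "d2 = NA' gchoose Suc i"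
      define V where "V = MB1 gchoose k"
      define c1 where "c1 = MB gchoose k"
      define c2 where "c2 = MB gchoose j"
      have e1: "NA * d1 = real (Suc i) * y"
        using gbinomial_absorption[of i NA] r unfolding d1_def y_def by simp
      have e1': "NA * d2 = (NA - real (Suc i)) * y"
        using gbinomial_absorb_comp[of NA "Suc i"] r unfolding d2_def y_def by simp
      have e2: "MB1 * c1 = (MB1 - real k) * V"
        using gbinomial_absorb_comp[of MB1 k] r unfolding c1_def V_def by simp
      have e3: "MB1 * c2 = real k * V"
        using gbinomial_absorption[of j MB1] r Suc unfolding c2_def V_def by simp
      have NAi: "NA - real (Suc i) = a + real k" using i by (simp add: NA_def)
      have "MB1 * ((real m+1+a)*(d1*c1 - d2*c2) + (2*real m+2+a+b)*(y*c2))
          = (NA*d1)*(MB1*c1) - (NA*d2)*(MB1*c2) + (2*real m+2+a+b)*y*(MB1*c2)"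
        by (simp add: NA_def algebra_simps)
      also have "\<dots> = (real (Suc i) * y)*((MB1 - real k) * V) - ((a + real k) * y)*(real k * V)
           + (2*real m+2+a+b)*y*(real k * V)"
        unfolding e1 e1' e2 e3 NAi by simp
      also have "\<dots> = MB1 * ((real m+1)*(y*V))"
        using i by (simp add: MB1_def algebra_simps)
      finally have "(real m+1+a)*(d1*c1 - d2*c2) + (2*real m+2+a+b)*(y*c2) = (real m+1)*(y*V)"
        using MB1nz by simp
      then show ?thesis using Suc False i unfolding jcs mi y_def[symmetric] d1_def[symmetric]
        d2_def[symmetric] V_def[symmetric] c1_def[symmetric] c2_def[symmetric] by (simp add: algebra_simps)
    qed
  qed
qed

lemma IB:
  "(real m+a+b+2)*(Y*H m (jc m (a+1) (b+1)) X Y) = (real m+1)*H (Suc m) (jc (Suc m) a b) X Y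
    + (real m+1+b)*(Y*H m (jc m (a+1) b) X Y - X*H m (jc m (a+1) b) X Y)"
  unfolding HX HY Hsmult Hdiff Hadd
  by (rule Hcong) (rule Bc)

lemma IA:
  assumes "real m + 1 + b \<noteq> 0"
  shows "(real m+1)*H (Suc m) (jc (Suc m) a b) X Y
    = (real m+1+a)*(Y*H m (jc m a b) X Y - X*H m (jc m a b) X Y) + (2*real m+2+a+b)*(X*H m (jc m (a+1) b) X Y)"
  unfolding HX HY Hsmult Hdiff Hadd
  by (rule Hcong) (rule Ac[OF _ assms])



definition Hd :: "nat \<Rightarrow> (nat \<Rightarrow> real) \<Rightarrow> real \<Rightarrow> real \<Rightarrow> real" where
  "Hd m c X Y = (\<Sum>k=0..m. c k * (real k * X^(k-1) * (1/2) * Y^(m-k) + X^k * (real (m-k) * Y^(m-k-1) * (1/2))))"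

lemma Hderiv: "((\<lambda>x. H m c ((x-1)/2) ((x+1)/2)) has_real_derivative Hd m c ((x-1)/2) ((x+1)/2)) (at x)"
  unfolding H_def Hd_def
  apply (rule DERIV_sum)
  apply (auto intro!: derivative_eq_intros)
  apply (simp add: field_simps of_nat_diff)
  done

lemma powm1: "real k * X^(k-1) * X = real k * (X::real)^k"
  by (cases k) auto

lemma Hd_mult: "X*Y*Hd m c X Y = (1/2)*(Y*H m (\<lambda>k. real k * c k) X Y + X*H m (\<lambda>k. real (m-k)*c k) X Y)"
proof -
  have tm: "X*Y*(c k * (real k * X ^ (k - 1) * (1 / 2) * Y ^ (m - k) + X ^ k * (real (m - k) * Y ^ (m - k - 1) * (1 / 2))))
     = 1/2*(Y*(real k * c k * X^k * Y^(m-k)) + X*(real(m-k)*c k*X^k*Y^(m-k)))" for k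
  proof -
    have "X * Y * (c k * (real k * X ^ (k - 1) * (1 / 2) * Y ^ (m - k) + X ^ k * (real (m - k) * Y ^ (m - k - 1) * (1 / 2))))
     = (1/2) * c k * ((real k * X ^ (k - 1) * X) * Y ^ (m - k) * Y + X^k * X * (real (m - k) * Y ^ (m - k - 1) * Y))"
      by (simp add: algebra_simps)
    also have "\<dots> = (1/2) * c k * ((real k * X ^ k) * Y ^ (m - k) * Y + X^k * X * (real (m - k) * Y ^ (m - k)))"
      by (simp only: powm1)
    finally show ?thesis by (simp add: algebra_simps)
  qed
  show ?thesis
    unfolding H_def Hd_def by (simp only: sum_distrib_left sum.distrib[symmetric] tm)
qed

lemma powr_p1: "(z::real) > 0 \<Longrightarrow> z powr (a+1) = z powr a * z"
  by (simp add: powr_add)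

lemma Gderiv:
  assumes "-1 < x" "x < 1"
  shows "((\<lambda>x. (1-x) powr (a+1) * (1+x) powr (b+1) * jacobiP m (a+1) (b+1) x) has_real_derivative
     (-2*(real m+1)*((1-x) powr a*(1+x) powr b)*jacobiP (Suc m) a b x)) (at x)"
proof -
  define c where "c = jc m (a+1) (b+1)"
  define X where "X = (x-1)/2"
  define Y where "Y = (x+1)/2"
  have QH: "jacobiP m (a+1) (b+1) = (\<lambda>x. H m c ((x-1)/2) ((x+1)/2))"
    unfolding c_def by (rule ext) (rule jacobiP_H)
  have QD: "(jacobiP m (a+1) (b+1) has_real_derivative Hd m c X Y) (at x)"
    unfolding QH X_def Y_def by (rule Hderiv)
  have D: "((\<lambda>x. (1-x) powr (a+1) * (1+x) powr (b+1) * jacobiP m (a+1) (b+1) x) has_real_derivative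
     (((a+1)*(1-x) powr (a+1-1)*(-1))*(1+x) powr (b+1) + ((b+1)*(1+x) powr (b+1-1) * 1)*(1-x) powr (a+1)) * jacobiP m (a+1) (b+1) x
       + Hd m c X Y * ((1-x) powr (a+1) * (1+x) powr (b+1))) (at x)"
    using assms
    using QD by (intro derivative_eq_intros) auto
  have p1: "(1-x) powr (a+1) = (1-x) powr a * (1-x)" "(1+x) powr (b+1) = (1+x) powr b * (1+x)"
    using assms by (auto intro!: powr_p1)
  have I: "(a+1)*Y*H m c X Y + (b+1)*X*H m c X Y
   + Y*H m (\<lambda>k. real k * c k) X Y + X*H m (\<lambda>k. real (m-k) * c k) X Y
   = (real m+1) * H (Suc m) (jc (Suc m) a b) X Y"
    unfolding c_def by (rule I1)
  have Q: "jacobiP m (a+1) (b+1) x = H m c X Y" unfolding QH X_def Y_def ..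
  have P: "jacobiP (Suc m) a b x = H (Suc m) (jc (Suc m) a b) X Y" unfolding X_def Y_def by (rule jacobiP_H)
  have xs: "1 - x = -2*X" "1 + x = 2*Y" unfolding X_def Y_def by auto
  have "(((a+1)*(1-x) powr (a+1-1)*(-1))*(1+x) powr (b+1) + ((b+1)*(1+x) powr (b+1-1) * 1)*(1-x) powr (a+1)) * jacobiP m (a+1) (b+1) x
       + Hd m c X Y * ((1-x) powr (a+1) * (1+x) powr (b+1))
     = ((1-x) powr a*(1+x) powr b) * (-2) * ((a+1)*Y*H m c X Y + (b+1)*X*H m c X Y + 2*(X*Y*Hd m c X Y))"
    unfolding p1 Q by (simp add: xs algebra_simps)
  also have "\<dots> = ((1-x) powr a*(1+x) powr b) * (-2) * ((a+1)*Y*H m c X Y + (b+1)*X*H m c X Y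
      + Y*H m (\<lambda>k. real k * c k) X Y + X*H m (\<lambda>k. real (m-k) * c k) X Y)"
    unfolding Hd_mult by (simp add: algebra_simps)
  also have "\<dots> = ((1-x) powr a*(1+x) powr b) * (-2) * ((real m+1) * H (Suc m) (jc (Suc m) a b) X Y)"
    by (simp only: I)
  also have "\<dots> = -2*(real m+1)*((1-x) powr a*(1+x) powr b)*jacobiP (Suc m) a b x"
    unfolding P by (simp add: algebra_simps)
  finally show ?thesis using D by simp
qed



lemma at_zero:
  assumes "b > -1" "jacobiP (Suc m) a b x = 0"
  shows "(real m+a+b+2)*(2*real m+2+a+b)*((1-x^2)*jacobiP m (a+1) (b+1) x) = 4*(real m+1+a)*(real m+1+b)*jacobiP m a b x"
proof -
  define X where "X = (x-1)/2"
  define Y where "Y = (x+1)/2"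
  have YX: "Y - X = 1" unfolding X_def Y_def by (simp add: field_simps)
  have Q: "jacobiP m (a+1) (b+1) x = H m (jc m (a+1) (b+1)) X Y" unfolding X_def Y_def by (rule jacobiP_H)
  have R: "jacobiP m (a+1) b x = H m (jc m (a+1) b) X Y" unfolding X_def Y_def by (rule jacobiP_H)
  have E: "jacobiP m a b x = H m (jc m a b) X Y" unfolding X_def Y_def by (rule jacobiP_H)
  have P: "H (Suc m) (jc (Suc m) a b) X Y = 0" using assms(2) jacobiP_H[of "Suc m" a b x] unfolding X_def Y_def by simp
  have nz: "real m + 1 + b \<noteq> 0" using assms(1) by linarith
  have b1: "(real m+a+b+2)*(Y*H m (jc m (a+1) (b+1)) X Y) = (real m+1+b)*(Y*H m (jc m (a+1) b) X Y - X*H m (jc m (a+1) b) X Y)"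
    using IB[where X=X and Y=Y and m=m and a=a and b=b] P by simp
  have b2: "(Y*H m (jc m (a+1) b) X Y - X*H m (jc m (a+1) b) X Y) = H m (jc m (a+1) b) X Y"
    using YX by (metis left_diff_distrib mult_1)
  have a1: "0 = (real m+1+a)*(Y*H m (jc m a b) X Y - X*H m (jc m a b) X Y) + (2*real m+2+a+b)*(X*H m (jc m (a+1) b) X Y)"
    using IA[OF nz, where X=X and Y=Y and a=a] P by simp
  have a2: "(Y*H m (jc m a b) X Y - X*H m (jc m a b) X Y) = H m (jc m a b) X Y"
    using YX by (metis left_diff_distrib mult_1)
  have x2: "1 - x^2 = -4*X*Y" unfolding X_def Y_def by (simp add: field_simps power2_eq_square)
  have "(real m+a+b+2)*(2*real m+2+a+b)*((1-x^2)*jacobiP m (a+1) (b+1) x)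
      = -4*X*(2*real m+2+a+b)*((real m+a+b+2)*(Y*H m (jc m (a+1) (b+1)) X Y))"
    unfolding x2 Q by (simp add: algebra_simps)
  also have "\<dots> = -4*(real m+1+b)*((2*real m+2+a+b)*(X*H m (jc m (a+1) b) X Y))"
    unfolding b1 b2 by (simp add: algebra_simps)
  also have "\<dots> = 4*(real m+1+b)*((real m+1+a)*H m (jc m a b) X Y)"
  proof -
    have a3: "(real m+1+a)*H m (jc m a b) X Y = -((2*real m+2+a+b)*(X*H m (jc m (a+1) b) X Y))"
      using a1 unfolding a2 by linarith
    show ?thesis unfolding a3 by (simp add: algebra_simps)
  qed
  also have "\<dots> = 4*(real m+1+a)*(real m+1+b)*jacobiP m a b x"
    unfolding E by (simp add: algebra_simps)
  finally show ?thesis .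
qed

definition G :: "nat \<Rightarrow> real \<Rightarrow> real \<Rightarrow> real \<Rightarrow> real" where
  "G m a b x = (1-x) powr (a+1) * (1+x) powr (b+1) * jacobiP m (a+1) (b+1) x"

lemma jacobiP_cont: "continuous_on S (jacobiP n a b)"
  unfolding jacobiP_def by (intro continuous_intros)

lemma G_cont:
  assumes "a > -1" "b > -1"
  shows "continuous_on {-1..1} (G m a b)"
  unfolding G_def
  using assms
  by (intro continuous_intros continuous_on_powr' jacobiP_cont) auto

lemma G_ends: "G m a b (-1) = 0" "G m a b 1 = 0"
  unfolding G_def by simp_all

lemma G_deriv:
  assumes "-1 < x" "x < 1"
  shows "(G m a b has_real_derivative (-2*(real m+1)*((1-x) powr a*(1+x) powr b)*jacobiP (Suc m) a b x)) (at x)"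
  unfolding G_def[abs_def] using Gderiv[OF assms] .

lemma chain_less:
  assumes "\<forall>i<N. u i < (u (Suc i)::real)" "i < j" "j \<le> N"
  shows "u i < u j"
  using assms(2,3)
proof (induction j)
  case 0 then show ?case by simp
next
  case (Suc j)
  have "u j < u (Suc j)" using assms(1) Suc.prems by auto
  moreover have "u i \<le> u j"
  proof (cases "i = j")
    case False
    then have "i < j" using Suc.prems by simp
    then show ?thesis using Suc.IH Suc.prems by simp
  qed simp
  ultimately show ?case by simp
qed

lemma chain_le:
  assumes "\<forall>i<N. u i < (u (Suc i)::real)" "i \<le> j" "j \<le> N"
  shows "u i \<le> u j"
  using chain_less[OF assms(1) _ assms(3), of i] assms(2)
  by (cases "i = j") auto

lemma step:
  assumes ab: "a > -1" "b > -1" and u: "u 0 = -1" "u (Suc m) = 1" "\<forall>i\<le>m. u i < u (Suc i)"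
    "\<forall>i. 1\<le>i \<longrightarrow> i\<le>m \<longrightarrow> jacobiP m (a+1) (b+1) (u i) = 0"
  shows "\<exists>z. \<forall>i\<le>m. u i < z i \<and> z i < u (Suc i) \<and> jacobiP (Suc m) a b (z i) = 0"
proof -
  have ch: "\<forall>i<Suc m. u i < u (Suc i)" using u(3) by auto
  have bnd: "-1 \<le> u i \<and> u i \<le> 1" if "i \<le> Suc m" for i
    using chain_le[OF ch, of 0 i] chain_le[OF ch, of i "Suc m"] that u by auto
  have G0: "G m a b (u i) = 0" if "i \<le> Suc m" for i
  proof (cases "i = 0 \<or> i = Suc m")
    case True then show ?thesis using u G_ends by auto
  next
    case False then show ?thesis using that u(4) unfolding G_def by auto
  qed
  have "\<exists>z. u i < z \<and> z < u (Suc i) \<and> jacobiP (Suc m) a b z = 0" if i: "i \<le> m" for i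
  proof -
    let ?D = "\<lambda>x. -2*(real m+1)*((1-x) powr a*(1+x) powr b)*jacobiP (Suc m) a b x"
    have lt: "u i < u (Suc i)" using u(3) i by auto
    have sub: "{u i..u (Suc i)} \<subseteq> {-1..1}" using bnd[of i] bnd[of "Suc i"] i by auto
    have "\<exists>z. u i < z \<and> z < u (Suc i) \<and> (*) (?D z) = (\<lambda>v. 0)"
    proof (rule Rolle_deriv[OF lt])
      show "G m a b (u i) = G m a b (u (Suc i))" using G0[of i] G0[of "Suc i"] i by simp
      show "continuous_on {u i..u (Suc i)} (G m a b)"
        using continuous_on_subset[OF G_cont[OF ab] sub] .
      fix x assume "u i < x" "x < u (Suc i)"
      then have "-1 < x" "x < 1" using bnd[of i] bnd[of "Suc i"] i by auto
      then show "(G m a b has_derivative (*) (?D x)) (at x)"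
        using G_deriv[of x m a b] unfolding has_field_derivative_def by simp
    qed
    then obtain z where z: "u i < z" "z < u (Suc i)" "(*) (?D z) = (\<lambda>v. 0)" by blast
    then have "?D z * 1 = 0" by (metis (no_types))
    then have "?D z = 0" by simp
    moreover have "-1 < z" "z < 1" using z bnd[of i] bnd[of "Suc i"] i by auto
    ultimately have "jacobiP (Suc m) a b z = 0" by simp
    then show ?thesis using z by blast
  qed
  then show ?thesis by metis
qed

lemma zeros_exist:
  "a > -1 \<Longrightarrow> b > -1 \<Longrightarrow> \<exists>s. s 0 = -1 \<and> s (Suc m) = 1 \<and> (\<forall>i\<le>m. s i < s (Suc i))
      \<and> (\<forall>i. 1\<le>i \<longrightarrow> i\<le>m \<longrightarrow> jacobiP m a b (s i) = 0)"
proof (induction m arbitrary: a b)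
  case 0
  show ?case by (rule exI[of _ "\<lambda>i. if i = 0 then -1 else 1"]) auto
next
  case (Suc m)
  from Suc.IH[of "a+1" "b+1"] Suc.prems obtain u where
    u: "u 0 = -1" "u (Suc m) = 1" "\<forall>i\<le>m. u i < u (Suc i)"
    "\<forall>i. 1\<le>i \<longrightarrow> i\<le>m \<longrightarrow> jacobiP m (a+1) (b+1) (u i) = 0" by auto
  from step[OF Suc.prems u] obtain z where
    z: "\<forall>i\<le>m. u i < z i \<and> z i < u (Suc i) \<and> jacobiP (Suc m) a b (z i) = 0" by blast
  define s where "s i = (if i = 0 then -1 else if i \<le> Suc m then z (i-1) else 1)" for i
  have "s 0 = -1" "s (Suc (Suc m)) = 1" unfolding s_def by auto
  moreover have "\<forall>i\<le>Suc m. s i < s (Suc i)"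
  proof (intro allI impI)
    fix i assume i: "i \<le> Suc m"
    show "s i < s (Suc i)"
    proof (cases i)
      case 0 then show ?thesis using z u unfolding s_def by force
    next
      case (Suc j)
      show ?thesis
      proof (cases "j = m")
        case True then show ?thesis using z u Suc unfolding s_def by force
      next
        case False
        then have "j < m" using i Suc by auto
        then show ?thesis using z[rule_format, of j] z[rule_format, of "Suc j"] Suc unfolding s_def by force
      qed
    qed
  qed
  moreover have "\<forall>i. 1\<le>i \<longrightarrow> i\<le>Suc m \<longrightarrow> jacobiP (Suc m) a b (s i) = 0"
  proof (intro allI impI)
    fix i assume i: "1 \<le> i" "i \<le> Suc m"
    then have "s i = z (i-1)" "i - 1 \<le> m" unfolding s_def by auto
    then show "jacobiP (Suc m) a b (s i) = 0" using z by auto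
  qed
  ultimately show ?case by blast
qed



lemma P_sign:
  assumes nz: "\<forall>x. l<x \<and> x<r \<longrightarrow> jacobiP n a b x \<noteq> 0"
    and "l<x" "x<r" "l<y" "y<r"
  shows "jacobiP n a b x * jacobiP n a b y > 0"
proof (rule ccontr)
  let ?P = "jacobiP n a b"
  assume neg: "\<not> ?P x * ?P y > 0"
  have px: "?P x \<noteq> 0" and py: "?P y \<noteq> 0" using nz assms by auto
  have opp: "(?P x < 0 \<and> ?P y > 0) \<or> (?P x > 0 \<and> ?P y < 0)"
    using neg px py by (metis linorder_neqE_linordered_idom mult_neg_neg mult_pos_pos)
  have "\<exists>c. min x y \<le> c \<and> c \<le> max x y \<and> ?P c = 0"
  proof (cases "x \<le> y")
    case True
    show ?thesis
    proof (cases "?P x < 0")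
      case True
      then show ?thesis using IVT'[of ?P x 0 y] opp \<open>x \<le> y\<close> jacobiP_cont by force
    next
      case False
      then show ?thesis using IVT2'[of ?P y 0 x] opp \<open>x \<le> y\<close> jacobiP_cont by force
    qed
  next
    case False
    show ?thesis
    proof (cases "?P y < 0")
      case True
      then show ?thesis using IVT'[of ?P y 0 x] opp False jacobiP_cont by force
    next
      case False
      then show ?thesis using IVT2'[of ?P x 0 y] opp \<open>\<not> x \<le> y\<close> jacobiP_cont by force
    qed
  qed
  then obtain c where "min x y \<le> c" "c \<le> max x y" "?P c = 0" by blast
  then show False using nz assms by (metis max_less_iff_conj min_less_iff_conj order_le_less_trans order_less_le_trans)
qed

lemma piece:
  fixes f F :: "real \<Rightarrow> real"
  assumes lr: "l < r" and cont: "continuous_on {l..r} F"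
    and der: "\<And>x. l < x \<Longrightarrow> x < r \<Longrightarrow> (F has_real_derivative f x) (at x)"
    and sgn: "\<And>x y. l < x \<Longrightarrow> x < r \<Longrightarrow> l < y \<Longrightarrow> y < r \<Longrightarrow> f x * f y > 0"
  shows "((\<lambda>x. \<bar>f x\<bar>) has_integral \<bar>F r - F l\<bar>) {l..r}"
proof -
  have I: "(f has_integral (F r - F l)) {l..r}"
    using lr cont der
    by (intro fundamental_theorem_of_calculus_interior)
       (auto simp: has_real_derivative_iff_has_vector_derivative[symmetric])
  define x0 where "x0 = (l+r)/2"
  have x0: "l < x0" "x0 < r" using lr unfolding x0_def by auto
  have nn: "0 \<le> i" if "((\<lambda>x. \<bar>f x\<bar>) has_integral i) {l..r}" for i
    using has_integral_nonneg[OF that] by simp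
  show ?thesis
  proof (cases "f x0 > 0")
    case True
    have pos: "f x > 0" if "l < x" "x < r" for x
      using sgn[OF that x0] True by (simp add: zero_less_mult_iff)
    have "((\<lambda>x. \<bar>f x\<bar>) has_integral (F r - F l)) {l..r}"
    proof (rule has_integral_spike_finite[where S="{l,r}", OF _ _ I])
      fix x assume "x \<in> {l..r} - {l,r}"
      then have "l < x" "x < r" by auto
      then show "\<bar>f x\<bar> = f x" using pos by fastforce
    qed simp
    with nn show ?thesis by (metis abs_of_nonneg)
  next
    case False
    then have "f x0 < 0" using sgn[OF x0 x0] by (metis linorder_neqE_linordered_idom mult_zero_left order_less_irrefl)
    then have neg: "f x < 0" if "l < x" "x < r" for x
      using sgn[OF that x0] by (simp add: zero_less_mult_iff)
    have "((\<lambda>x. \<bar>f x\<bar>) has_integral -(F r - F l)) {l..r}"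
    proof (rule has_integral_spike_finite[where S="{l,r}", OF _ _ has_integral_neg[OF I]])
      fix x assume "x \<in> {l..r} - {l,r}"
      then have "l < x" "x < r" by auto
      then show "\<bar>f x\<bar> = - f x" using neg by fastforce
    qed simp
    with nn show ?thesis by (metis abs_minus_cancel abs_of_nonneg)
  qed
qed

lemma G_mvt:
  assumes ab: "a > -1" "b > -1" and "-1 \<le> l" "l < r" "r \<le> 1"
  shows "\<exists>\<xi>. l < \<xi> \<and> \<xi> < r \<and> G m a b r - G m a b l
          = (r - l) * (-2*(real m+1)*((1-\<xi>) powr a*(1+\<xi>) powr b)*jacobiP (Suc m) a b \<xi>)"
proof -
  have sub: "{l..r} \<subseteq> {-1..1}" using assms by auto
  have "\<exists>L z. l < z \<and> z < r \<and> DERIV (G m a b) z :> L \<and> G m a b r - G m a b l = (r - l) * L"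
  proof (rule MVT[OF \<open>l < r\<close>])
    show "continuous_on {l..r} (G m a b)" using continuous_on_subset[OF G_cont[OF ab] sub] .
    fix x assume "l < x" "x < r"
    then have "-1 < x" "x < 1" using assms by auto
    then show "G m a b differentiable at x"
      using G_deriv[of x m a b] real_differentiable_def by blast
  qed
  then obtain L z where z: "l < z" "z < r" "DERIV (G m a b) z :> L" "G m a b r - G m a b l = (r - l) * L" by blast
  then have "-1 < z" "z < 1" using assms by auto
  from DERIV_unique[OF z(3) G_deriv[OF this]] z show ?thesis by blast
qed

lemma enum_eq:
  fixes f g :: "nat \<Rightarrow> real"
  assumes "\<forall>i<m. f i < f (Suc i)" "\<forall>i<m. g i < g (Suc i)" "f ` {0..m} = g ` {0..m}" "i \<le> m"
  shows "f i = g i"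
  using assms
proof (induction m arbitrary: i)
  case 0 then show ?case by auto
next
  case (Suc m)
  have fm: "f j \<le> f (Suc m)" if "j \<le> Suc m" for j using chain_le[OF Suc.prems(1) that] by simp
  have gm: "g j \<le> g (Suc m)" if "j \<le> Suc m" for j using chain_le[OF Suc.prems(2) that] by simp
  have "f (Suc m) \<in> g ` {0..Suc m}" using Suc.prems(3) by (metis atLeastAtMost_iff image_eqI le0 order_refl)
  then have "f (Suc m) \<le> g (Suc m)" using gm by auto
  moreover have "g (Suc m) \<in> f ` {0..Suc m}" using Suc.prems(3) by (metis atLeastAtMost_iff image_eqI le0 order_refl)
  then have "g (Suc m) \<le> f (Suc m)" using fm by auto
  ultimately have eq: "f (Suc m) = g (Suc m)" by simp
  have fl: "f j < f (Suc m)" if "j \<le> m" for j using chain_less[OF Suc.prems(1), of j "Suc m"] that by simp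
  have gl: "g j < g (Suc m)" if "j \<le> m" for j using chain_less[OF Suc.prems(2), of j "Suc m"] that by simp
  have "f ` {0..m} = f ` {0..Suc m} - {f (Suc m)}"
    using fl by (auto simp: le_Suc_eq) (metis less_irrefl)
  also have "\<dots> = g ` {0..Suc m} - {g (Suc m)}" using Suc.prems(3) eq by simp
  also have "\<dots> = g ` {0..m}"
    using gl by (auto simp: le_Suc_eq) (metis less_irrefl)
  finally have im: "f ` {0..m} = g ` {0..m}" .
  show ?case
  proof (cases "i = Suc m")
    case True then show ?thesis using eq by simp
  next
    case False
    then show ?thesis using Suc.IH[OF _ _ im, of i] Suc.prems by auto
  qed
qed

lemma integral_chain:
  fixes f :: "real \<Rightarrow> real"
  assumes mono: "\<forall>k<Suc n. v k < v (Suc k)"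
    and pieces: "\<And>k. k \<le> n \<Longrightarrow> (f has_integral I k) {v k..v (Suc k)}"
  shows "(f has_integral (\<Sum>k=0..n. I k)) {v 0..v (Suc n)}"
proof -
  have "N \<le> n \<Longrightarrow> (f has_integral (\<Sum>k=0..N. I k)) {v 0..v (Suc N)}" for N
  proof (induction N)
    case 0 then show ?case using pieces[of 0] by simp
  next
    case (Suc N)
    have "v 0 \<le> v (Suc N)" using chain_le[OF mono, of 0 "Suc N"] Suc.prems by simp
    moreover have "v (Suc N) \<le> v (Suc (Suc N))" using mono[rule_format, of "Suc N"] Suc.prems by simp
    ultimately show ?case
      using has_integral_combine[OF _ _ Suc.IH pieces[of "Suc N"]] Suc.prems by simp
  qed
  then show ?thesis by simp
qed

lemma P1_pos:
  assumes "a > -1"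
  shows "jacobiP n a b 1 > 0"
proof -
  have "jacobiP n a b 1 = (real n + a) gchoose n"
    unfolding jacobiP_def by (simp add: sum.atLeast_Suc_atMost zero_power)
  also have "\<dots> = pochhammer (a + 1) n / fact n"
    by (simp add: gbinomial_pochhammer' algebra_simps)
  also have "\<dots> > 0" using assms by (intro divide_pos_pos pochhammer_pos) auto
  finally show ?thesis .
qed



lemma absdiff: "(x::real) * y \<le> 0 \<Longrightarrow> \<bar>x - y\<bar> = \<bar>x\<bar> + \<bar>y\<bar>"
  by (cases "x \<ge> 0"; cases "y \<ge> 0") (auto simp: mult_le_0_iff)

lemma neg_of: "x * y < 0 \<Longrightarrow> (y::real) > 0 \<Longrightarrow> x < 0"
  by (meson mult_nonneg_nonneg not_less less_imp_le)

lemma not_npi: "(z::real) > -1 \<Longrightarrow> z \<noteq> 0 \<Longrightarrow> z \<notin> \<int>\<^sub>\<le>\<^sub>0"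
  by (auto elim!: nonpos_Ints_cases)

lemma const_id:
  fixes a b :: real and m :: nat
  assumes "a > -1" "b > -1" "2 * real (Suc m) + a + b - 1 \<noteq> 0"
  defines "Cn \<equiv> (2 * real (Suc m) + a + b + 1) * Gamma (real (Suc m) + a + b + 1) * fact (Suc m)
        / (2 powr (a + b + 1) * Gamma (real (Suc m) + a + 1) * Gamma (real (Suc m) + b + 1))"
  defines "Cm \<equiv> (2 * real m + a + b + 1) * Gamma (real m + a + b + 1) * fact m
        / (2 powr (a + b + 1) * Gamma (real m + a + 1) * Gamma (real m + b + 1))"
  defines "T \<equiv> (4 / (real (Suc m) + a + b + 1)) * ((real (Suc m) + a + b) / (2 * real (Suc m) + a + b))
           * ((2 * real (Suc m) + a + b + 1) / (2 * real (Suc m) + a + b - 1))"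
  shows "(Cn / (real m + 1)) * (4*(real m+1+a)*(real m+1+b)) = T * Cm * ((real m+a+b+2)*(2*real m+2+a+b))"
proof -
  define gA where "gA = Gamma (real m + a + 1)"
  define gB where "gB = Gamma (real m + b + 1)"
  define gS where "gS = Gamma (real m + a + b + 1)"
  have pa: "real m + a + 1 > 0" "real m + b + 1 > 0" using assms by auto
  have sab: "real m + a + b + 1 > -1" "real m + a + b + 1 \<noteq> 0" using assms(1-3) by (cases m; auto)+
  have "Gamma (real m + a + 1) > 0" "Gamma (real m + b + 1) > 0"
    using pa by (intro Gamma_real_pos; simp)+
  then have gA0: "gA \<noteq> 0" "gB \<noteq> 0" unfolding gA_def gB_def by auto
  have gS0: "gS \<noteq> 0" unfolding gS_def Gamma_eq_zero_iff using not_npi[OF sab] .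
  have e1: "Gamma (real (Suc m) + a + 1) = (real m + a + 1) * gA"
    unfolding gA_def using Gamma_plus1[of "real m + a + 1"] pa
    by (simp add: algebra_simps nonpos_Ints_def; metis add.commute add.left_commute)
  have e2: "Gamma (real (Suc m) + b + 1) = (real m + b + 1) * gB"
    unfolding gB_def using Gamma_plus1[of "real m + b + 1"] pa
    by (simp add: algebra_simps nonpos_Ints_def; metis add.commute add.left_commute)
  have e3: "Gamma (real (Suc m) + a + b + 1) = (real m + a + b + 1) * gS"
    unfolding gS_def using Gamma_plus1[OF not_npi[OF sab]]
    by (simp add: algebra_simps)
  have f: "fact (Suc m) = (real m + 1) * fact m" by simp
  have nz: "2 * real m + a + b + 1 \<noteq> 0" "real m + a + b + 2 \<noteq> 0" "2 * real m + a + b + 2 \<noteq> 0"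
     "2 * real m + a + b + 3 \<noteq> 0" "real m + 1 \<noteq> 0"
    using assms by auto
  have p: "(2::real) powr (a + b + 1) \<noteq> 0" by simp
  have pa': "real m + a + 1 \<noteq> 0" "real m + b + 1 \<noteq> 0" using pa by auto
  have fm: "(fact m :: real) \<noteq> 0" by simp
  define K where "K = gS * fact m / (2 powr (a + b + 1) * gA * gB)"
  have Cm_eq: "Cm = (2*real m+a+b+1) * K"
    unfolding Cm_def K_def gA_def gB_def gS_def by (simp only: times_divide_eq_right mult.assoc)
  define r where "r = ((2*real m+a+b+3)*(real m+a+b+1)*(real m+1)) / ((real m+a+1)*(real m+b+1))"
  have Cn_eq: "Cn = r * K"
  proof -
    have "Cn = ((2*real m+a+b+3)*((real m+a+b+1)*gS)*((real m+1)*fact m))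
        / (2 powr (a + b + 1)*((real m+a+1)*gA)*((real m+b+1)*gB))"
      unfolding Cn_def e1 e2 e3 f by (simp add: algebra_simps)
    also have "\<dots> = r * K" unfolding r_def K_def
      by (simp only: times_divide_times_eq; simp only: ac_simps)
    finally show ?thesis .
  qed
  have R: "r / (real m + 1) * (4*(real m+1+a)*(real m+1+b)) = T * (2*real m+a+b+1) * ((real m+a+b+2)*(2*real m+2+a+b))"
  proof -
    define A where "A = real m+a+b+2"
    define B where "B = real m+a+b+1"
    define C where "C = 2*real m+2+a+b"
    define D where "D = 2*real m+a+b+3"
    define E where "E = 2*real m+a+b+1"
    define U where "U = real m+a+1"
    define V where "V = real m+b+1"
    define W where "W = real m+1"
    have nzs: "A \<noteq> 0" "C \<noteq> 0" "E \<noteq> 0" "U \<noteq> 0" "V \<noteq> 0" "W \<noteq> 0"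
      unfolding A_def C_def E_def U_def V_def W_def using nz pa' by (simp_all add: algebra_simps)
    have es: "real (Suc m) + a + b + 1 = A" "real (Suc m) + a + b = B" "2 * real (Suc m) + a + b = C"
      "2 * real (Suc m) + a + b + 1 = D" "2 * real (Suc m) + a + b - 1 = E"
      "real m+1+a = U" "real m+1+b = V" "2*real m+a+b+3 = D" "real m+a+b+1 = B"
      "real m+a+1 = U" "real m+b+1 = V" "2*real m+a+b+1 = E" "real m+a+b+2 = A" "2*real m+2+a+b = C"
      unfolding A_def B_def C_def D_def E_def U_def V_def by simp_all
    have Weq: "real m + 1 = W" unfolding W_def ..
    have "r / (real m + 1) * (4*(real m+1+a)*(real m+1+b)) = 4*B*D"
      unfolding r_def es unfolding Weq using nzs by (simp add: field_simps)
    moreover have "T * (2*real m+a+b+1) * ((real m+a+b+2)*(2*real m+2+a+b)) = 4*B*D"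
    proof -
      have eD: "2 * real (Suc m) + a + b + 1 = D" and eE: "2 * real (Suc m) + a + b - 1 = E"
        and eA: "real (Suc m) + a + b + 1 = A" and eB: "real (Suc m) + a + b = B"
        and eC: "2 * real (Suc m) + a + b = C"
        unfolding A_def B_def C_def D_def E_def by simp_all
      have T_eq: "T = (4/A)*(B/C)*(D/E)" unfolding T_def unfolding eD eE eA unfolding eB eC ..
      show ?thesis unfolding T_eq es using nzs by (simp add: field_simps)
    qed
    ultimately show ?thesis by simp
  qed
  have "(r*K)/(real m+1)*(4*(real m+1+a)*(real m+1+b)) = (r/(real m+1)*(4*(real m+1+a)*(real m+1+b)))*K"
    by (simp only: times_divide_eq_left times_divide_eq_right ac_simps)
  also have "\<dots> = (T * (2*real m+a+b+1) * ((real m+a+b+2)*(2*real m+2+a+b)))*K" unfolding R ..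
  also have "\<dots> = T * ((2*real m+a+b+1)*K) * ((real m+a+b+2)*(2*real m+2+a+b))"
    by (simp only: ac_simps)
  finally show ?thesis unfolding Cn_eq Cm_eq .
qed

theorem corollary4p7:
  fixes a b :: real and n :: nat and t :: "nat \<Rightarrow> real"
  assumes "a > -1" and "b > -1" and "n \<ge> 1"
    and "2 * real n + a + b - 1 \<noteq> 0"
    and "\<And>i j. 1 \<le> i \<Longrightarrow> i < j \<Longrightarrow> j \<le> n \<Longrightarrow> t i < t j"
    and "{x. jacobiP n a b x = 0} = t ` {1..n}"
  shows "((\<lambda>x. \<bar>jacobi_fun n a b x\<bar>) has_integral
           (4 / (real n + a + b + 1)) * ((real n + a + b) / (2 * real n + a + b))
           * ((2 * real n + a + b + 1) / (2 * real n + a + b - 1))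
           * (\<Sum>m=1..n. (-1) ^ (m + n) * jacobi_fun (n - 1) a b (t m))) {-1..1}"
proof -
  obtain m where n: "n = Suc m" using assms(3) by (cases n) auto
  have ab: "a > -1" "b > -1" using assms by auto
  obtain u where u: "u 0 = -1" "u (Suc m) = 1" "\<forall>i\<le>m. u i < u (Suc i)"
      "\<forall>i. 1\<le>i \<longrightarrow> i\<le>m \<longrightarrow> jacobiP m (a+1) (b+1) (u i) = 0"
    using zeros_exist[of "a+1" "b+1" m] ab by auto
  obtain z where z: "\<forall>i\<le>m. u i < z i \<and> z i < u (Suc i) \<and> jacobiP (Suc m) a b (z i) = 0"
    using step[OF ab u] by blast
  have zmono: "\<forall>i<m. z i < z (Suc i)"
    using z by (metis Suc_leI less_imp_le order.strict_trans)
  have tmono: "\<forall>i<m. t (Suc i) < t (Suc (Suc i))" using assms(5) n by auto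
  have zl: "z i < z j" if "i < j" "j \<le> m" for i j using chain_less[OF zmono that] .
  have injz: "inj_on z {0..m}"
    by (rule inj_onI) (metis linorder_neqE_nat zl atLeastAtMost_iff less_irrefl)
  have timg: "t ` {1..n} = (\<lambda>i. t (Suc i)) ` {0..m}"
    unfolding n by (auto simp: image_iff) (metis Suc_le_D Suc_le_mono atLeastAtMost_iff le0 not_less_eq_eq)
  have zsub: "z ` {0..m} \<subseteq> (\<lambda>i. t (Suc i)) ` {0..m}"
    using z assms(6) timg n by auto
  have cz: "card (z ` {0..m}) = Suc m" using card_image[OF injz] by simp
  have ct: "card ((\<lambda>i. t (Suc i)) ` {0..m}) \<le> Suc m" using card_image_le[of "{0..m}"] by simp
  have zeq: "z ` {0..m} = (\<lambda>i. t (Suc i)) ` {0..m}"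
    using card_subset_eq[OF _ zsub] card_mono[OF _ zsub] cz ct by fastforce
  have tz: "t (Suc i) = z i" if "i \<le> m" for i
    using enum_eq[OF zmono _ zeq that] tmono by simp
  define v where "v k = (if k = 0 then -1 else if k \<le> n then t k else 1)" for k
  have vt: "v k = t k" if "1 \<le> k" "k \<le> n" for k using that unfolding v_def by auto
  have v0: "v 0 = -1" and vn: "v (Suc n) = 1" unfolding v_def by auto
  have vmono: "\<forall>k<Suc n. v k < v (Suc k)"
  proof (intro allI impI)
    fix k assume k: "k < Suc n"
    show "v k < v (Suc k)"
    proof (cases "k = 0")
      case True
      then show ?thesis using z u tz[of 0] n unfolding v_def by force
    next
      case False
      show ?thesis
      proof (cases "k = n")
        case True
        then show ?thesis using z u tz[of m] n unfolding v_def by force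
      next
        case False
        then show ?thesis using \<open>k \<noteq> 0\<close> k assms(5)[of k "Suc k"] unfolding v_def by auto
      qed
    qed
  qed
  have vb: "-1 \<le> v k \<and> v k \<le> 1" if "k \<le> Suc n" for k
    using chain_le[OF vmono, of 0 k] chain_le[OF vmono, of k "Suc n"] that v0 vn by auto
  have zeroset: "jacobiP n a b x = 0 \<longleftrightarrow> (\<exists>j. 1 \<le> j \<and> j \<le> n \<and> x = v j)" for x
    using assms(6) vt by (auto simp: set_eq_iff image_iff)
  have nz: "\<forall>x. v k < x \<and> x < v (Suc k) \<longrightarrow> jacobiP n a b x \<noteq> 0" if "k \<le> n" for k
  proof (intro allI impI notI)
    fix x assume x: "v k < x \<and> x < v (Suc k)" and "jacobiP n a b x = 0"
    then obtain j where j: "1 \<le> j" "j \<le> n" "x = v j" using zeroset by blast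
    show False
    proof (cases "j \<le> k")
      case True
      then show False using chain_le[OF vmono, of j k] x j that by auto
    next
      case False
      then show False using chain_le[OF vmono, of "Suc k" j] x j that by auto
    qed
  qed
  define w where "w x = (1-x) powr a * (1+x) powr b" for x
  define Cn where "Cn = (2 * real n + a + b + 1) * Gamma (real n + a + b + 1) * fact n
        / (2 powr (a + b + 1) * Gamma (real n + a + 1) * Gamma (real n + b + 1))"
  define Cm where "Cm = (2 * real m + a + b + 1) * Gamma (real m + a + b + 1) * fact m
        / (2 powr (a + b + 1) * Gamma (real m + a + 1) * Gamma (real m + b + 1))"
  have fdef: "jacobi_fun n a b x = Cn * w x * jacobiP n a b x" for x
    unfolding jacobi_fun_def Cn_def w_def by (simp add: algebra_simps)
  have fmdef: "jacobi_fun (n-1) a b x = Cm * w x * jacobiP m a b x" for x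
    unfolding jacobi_fun_def Cm_def w_def n by (simp add: algebra_simps)
  have Cn_pos: "Cn > 0"
    unfolding Cn_def using ab n by (intro divide_pos_pos mult_pos_pos Gamma_real_pos) auto
  have wpos: "w x > 0" if "-1 < x" "x < 1" for x unfolding w_def using that by auto
  define c where "c = Cn / (2*(real m+1))"
  have c_pos: "c > 0" unfolding c_def using Cn_pos by auto
  define F where "F x = - c * G m a b x" for x
  have Fder: "(F has_real_derivative jacobi_fun n a b x) (at x)" if "-1 < x" "x < 1" for x
  proof -
    have "(F has_real_derivative - c * (-2*(real m+1)*((1-x) powr a*(1+x) powr b)*jacobiP (Suc m) a b x)) (at x)"
      unfolding F_def[abs_def] by (intro DERIV_cmult G_deriv that)
    moreover have "- c * (-2*(real m+1)*((1-x) powr a*(1+x) powr b)*jacobiP (Suc m) a b x) = jacobi_fun n a b x"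
      unfolding fdef unfolding c_def w_def n by (simp add: field_simps)
    ultimately show ?thesis by simp
  qed
  have Fcont: "continuous_on {-1..1} F"
    unfolding F_def[abs_def] using G_cont[OF ab] by (intro continuous_intros)
  have pieces: "((\<lambda>x. \<bar>jacobi_fun n a b x\<bar>) has_integral \<bar>F (v (Suc k)) - F (v k)\<bar>) {v k..v (Suc k)}"
    if k: "k \<le> n" for k
  proof (rule piece)
    show "v k < v (Suc k)" using vmono k by auto
    show "continuous_on {v k..v (Suc k)} F"
      using continuous_on_subset[OF Fcont] vb[of k] vb[of "Suc k"] k by auto
    fix x y assume x: "v k < x" "x < v (Suc k)"
    then show "(F has_real_derivative jacobi_fun n a b x) (at x)"
      using Fder vb[of k] vb[of "Suc k"] k by auto
    assume y: "v k < y" "y < v (Suc k)"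
    have "jacobiP n a b x * jacobiP n a b y > 0" using P_sign[OF nz[OF k] x y] .
    moreover have "w x > 0" "w y > 0" using wpos x y vb[of k] vb[of "Suc k"] k by auto
    ultimately have "(Cn * Cn) * (w x * w y) * (jacobiP n a b x * jacobiP n a b y) > 0"
      using Cn_pos by simp
    then show "jacobi_fun n a b x * jacobi_fun n a b y > 0" unfolding fdef by (simp add: algebra_simps)
  qed
  have total: "((\<lambda>x. \<bar>jacobi_fun n a b x\<bar>) has_integral (\<Sum>k=0..n. \<bar>F (v (Suc k)) - F (v k)\<bar>)) {-1..1}"
    using integral_chain[OF vmono pieces] v0 vn by simp
  define T where "T = (4 / (real n + a + b + 1)) * ((real n + a + b) / (2 * real n + a + b))
           * ((2 * real n + a + b + 1) / (2 * real n + a + b - 1))"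
  define Gt where "Gt k = G m a b (t k)" for k
  have zero_t: "jacobiP n a b (t k) = 0" if "1 \<le> k" "k \<le> n" for k using assms(6) that by auto
  have tb: "-1 < t k \<and> t k < 1" if k: "1 \<le> k" "k \<le> n" for k
  proof -
    have "v 0 < v k" using chain_less[OF vmono, of 0 k] k by simp
    moreover have "v k < v (Suc n)" using chain_less[OF vmono, of k "Suc n"] k by simp
    ultimately show ?thesis using v0 vn vt[OF k] by simp
  qed
  have Dneg_iff: "-2*(real m+1)*((1-x) powr a*(1+x) powr b)*jacobiP (Suc m) a b x < 0 \<longleftrightarrow> jacobiP n a b x > 0"
    if "-1 < x" "x < 1" for x
  proof -
    have "w x > 0" using wpos that .
    then show ?thesis unfolding w_def[symmetric] n by (simp add: mult_less_0_iff zero_less_mult_iff)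
  qed
  have Gn: "Gt n > 0"
  proof -
    have tn: "-1 < t n" "t n < 1" using tb[of n] assms(3) by auto
    obtain \<xi> where xi: "t n < \<xi>" "\<xi> < 1"
      "G m a b 1 - G m a b (t n) = (1 - t n) * (-2*(real m+1)*((1-\<xi>) powr a*(1+\<xi>) powr b)*jacobiP (Suc m) a b \<xi>)"
      using G_mvt[OF ab, of "t n" 1 m] tn by auto
    have nz2: "\<forall>x. t n < x \<and> x < 2 \<longrightarrow> jacobiP n a b x \<noteq> 0"
    proof (intro allI impI notI)
      fix x assume x: "t n < x \<and> x < 2" and "jacobiP n a b x = 0"
      then obtain j where j: "1 \<le> j" "j \<le> n" "x = v j" using zeroset by blast
      have "v j \<le> v n" using chain_le[OF vmono, of j n] j by simp
      then show False using x j vt[of n] assms(3) by simp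
    qed
    have "jacobiP n a b \<xi> * jacobiP n a b 1 > 0" using P_sign[OF nz2, of \<xi> 1] xi by simp
    moreover have "jacobiP n a b 1 > 0" using P1_pos[OF ab(1)] .
    ultimately have "jacobiP n a b \<xi> > 0" by (simp add: zero_less_mult_iff)
    then have "-2*(real m+1)*((1-\<xi>) powr a*(1+\<xi>) powr b)*jacobiP (Suc m) a b \<xi> < 0"
      using Dneg_iff[of \<xi>] xi tn by simp
    then have "G m a b 1 - G m a b (t n) < 0" using xi tn by (simp add: mult_pos_neg)
    then show ?thesis unfolding Gt_def using G_ends by simp
  qed
  have Galt: "Gt k * Gt (Suc k) < 0" if k: "1 \<le> k" "k < n" for k
  proof -
    have km: "k \<le> m" using k n by simp
    have tk: "t k = z (k-1)" using tz[of "k-1"] k km by simp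
    have tk1: "t (Suc k) = z k" using tz[of k] km by simp
    have ut: "t k < u k" "u k < t (Suc k)"
      using z[rule_format, of "k-1"] z[rule_format, of k] km k tk tk1 by auto
    have Gu: "G m a b (u k) = 0" using u(4) k km unfolding G_def by simp
    have b1: "-1 < t k" "t (Suc k) < 1" using tb[of k] tb[of "Suc k"] k by auto
    obtain \<xi>1 where x1: "t k < \<xi>1" "\<xi>1 < u k"
      "G m a b (u k) - G m a b (t k) = (u k - t k) * (-2*(real m+1)*((1-\<xi>1) powr a*(1+\<xi>1) powr b)*jacobiP (Suc m) a b \<xi>1)"
      using G_mvt[OF ab, of "t k" "u k" m] ut b1 by auto
    obtain \<xi>2 where x2: "u k < \<xi>2" "\<xi>2 < t (Suc k)"
      "G m a b (t (Suc k)) - G m a b (u k) = (t (Suc k) - u k) * (-2*(real m+1)*((1-\<xi>2) powr a*(1+\<xi>2) powr b)*jacobiP (Suc m) a b \<xi>2)"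
      using G_mvt[OF ab, of "u k" "t (Suc k)" m] ut b1 by auto
    have vk: "v k = t k" "v (Suc k) = t (Suc k)" using vt k by auto
    have PP: "jacobiP n a b \<xi>1 * jacobiP n a b \<xi>2 > 0"
      using P_sign[OF nz[of k], of \<xi>1 \<xi>2] vk x1 x2 ut k by simp
    have w1: "w \<xi>1 > 0" and w2: "w \<xi>2 > 0" using wpos x1 x2 ut b1 by auto
    define D1 where "D1 = -2*(real m+1)*((1-\<xi>1) powr a*(1+\<xi>1) powr b)*jacobiP (Suc m) a b \<xi>1"
    define D2 where "D2 = -2*(real m+1)*((1-\<xi>2) powr a*(1+\<xi>2) powr b)*jacobiP (Suc m) a b \<xi>2"
    have "D1 * D2 = (4*(real m+1)^2) * (w \<xi>1 * w \<xi>2) * (jacobiP n a b \<xi>1 * jacobiP n a b \<xi>2)"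
      unfolding D1_def D2_def w_def n by (simp add: power2_eq_square algebra_simps)
    also have "\<dots> > 0" using PP w1 w2 by simp
    finally have DD: "D1 * D2 > 0" .
    have g1: "Gt k = - ((u k - t k) * D1)" using x1 Gu unfolding Gt_def D1_def by simp
    have g2: "Gt (Suc k) = (t (Suc k) - u k) * D2" using x2 Gu unfolding Gt_def D2_def by simp
    have "Gt k * Gt (Suc k) = - (((u k - t k) * (t (Suc k) - u k)) * (D1 * D2))"
      unfolding g1 g2 by (simp add: algebra_simps)
    moreover have "(u k - t k) * (t (Suc k) - u k) > 0" using ut by simp
    ultimately show ?thesis using DD by (simp add: mult_pos_pos)
  qed
  have sgn_d: "(-1::real)^d * Gt (n - d) > 0" if "d < n" for d
    using that
  proof (induction d)
    case 0 then show ?case using Gn by simp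
  next
    case (Suc d)
    have IH: "(-1::real)^d * Gt (n - d) > 0" using Suc by simp
    have "Gt (n - Suc d) * Gt (Suc (n - Suc d)) < 0" using Galt[of "n - Suc d"] Suc.prems by simp
    moreover have "Suc (n - Suc d) = n - d" using Suc.prems by simp
    ultimately have neg: "Gt (n - Suc d) * Gt (n - d) < 0" by simp
    have sq: "(-1::real)^d * (-1)^d = 1" by (simp add: power_mult_distrib[symmetric])
    have eq: "((-1::real)^d * Gt (n - Suc d)) * ((-1)^d * Gt (n - d)) = ((-1)^d * (-1)^d) * (Gt (n - Suc d) * Gt (n - d))"
      by (simp only: ac_simps)
    have "((-1::real)^d * Gt (n - Suc d)) * ((-1)^d * Gt (n - d)) < 0"
      by (simp only: eq sq mult_1_left neg)
    then have "(-1::real)^d * Gt (n - Suc d) < 0" using IH by (rule neg_of)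
    then show ?case by simp
  qed
  have sgn: "(-1::real)^(n-k) * Gt k > 0" if "1 \<le> k" "k \<le> n" for k
    using sgn_d[of "n-k"] that by simp
  have gv: "G m a b (v (Suc k)) * G m a b (v k) \<le> 0" if k: "k \<le> n" for k
  proof (cases "k = 0 \<or> k = n")
    case True then show ?thesis using v0 vn G_ends by auto
  next
    case False
    then have "1 \<le> k" "k < n" using k by auto
    then show ?thesis using Galt[of k] vt[of k] vt[of "Suc k"] unfolding Gt_def
      by (simp add: mult.commute)
  qed
  have absF: "\<bar>F (v (Suc k)) - F (v k)\<bar> = c * (\<bar>G m a b (v (Suc k))\<bar> + \<bar>G m a b (v k)\<bar>)" if "k \<le> n" for k
  proof -
    have "F (v (Suc k)) - F (v k) = - c * (G m a b (v (Suc k)) - G m a b (v k))" unfolding F_def by (simp add: algebra_simps)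
    then have "\<bar>F (v (Suc k)) - F (v k)\<bar> = c * \<bar>G m a b (v (Suc k)) - G m a b (v k)\<bar>"
      using c_pos by (simp add: abs_mult)
    then show ?thesis using absdiff[OF gv[OF that]] by simp
  qed
  have S1: "(\<Sum>k=0..n. \<bar>F (v (Suc k)) - F (v k)\<bar>) = c * ((\<Sum>k=0..n. \<bar>G m a b (v (Suc k))\<bar>) + (\<Sum>k=0..n. \<bar>G m a b (v k)\<bar>))"
    using absF by (simp add: sum_distrib_left[symmetric] sum.distrib[symmetric] distrib_left[symmetric])
  have S2: "(\<Sum>k=0..n. \<bar>G m a b (v (Suc k))\<bar>) = (\<Sum>k=1..n. \<bar>G m a b (v k)\<bar>)"
  proof -
    have "(\<Sum>k=0..n. \<bar>G m a b (v (Suc k))\<bar>) = (\<Sum>k=Suc 0..Suc n. \<bar>G m a b (v k)\<bar>)"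
      by (rule sum.shift_bounds_cl_Suc_ivl[symmetric])
    also have "\<dots> = (\<Sum>k=1..n. \<bar>G m a b (v k)\<bar>) + \<bar>G m a b (v (Suc n))\<bar>" by simp
    finally show ?thesis using vn G_ends by simp
  qed
  have S3: "(\<Sum>k=0..n. \<bar>G m a b (v k)\<bar>) = (\<Sum>k=1..n. \<bar>G m a b (v k)\<bar>)"
    using sum.atLeast_Suc_atMost[of 0 n "\<lambda>k. \<bar>G m a b (v k)\<bar>"] v0 G_ends by simp
  have S4: "(\<Sum>k=1..n. \<bar>G m a b (v k)\<bar>) = (\<Sum>k=1..n. (-1)^(n-k) * Gt k)"
  proof (rule sum.cong)
    fix k assume "k \<in> {1..n}"
    then have k: "1 \<le> k" "k \<le> n" by auto
    have "\<bar>(-1::real)^(n-k)\<bar> = 1" by simp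
    then have "\<bar>Gt k\<bar> = \<bar>(-1::real)^(n-k) * Gt k\<bar>" by (simp add: abs_mult)
    also have "\<dots> = (-1)^(n-k) * Gt k" using sgn[OF k] by simp
    finally show "\<bar>G m a b (v k)\<bar> = (-1)^(n-k) * Gt k" using vt[OF k] unfolding Gt_def by simp
  qed simp
  have CI: "(Cn / (real m + 1)) * (4*(real m+1+a)*(real m+1+b)) = T * Cm * ((real m+a+b+2)*(2*real m+2+a+b))"
    using const_id[OF ab, of m] assms(4) unfolding Cn_def Cm_def T_def n by simp
  have D0: "(real m+a+b+2)*(2*real m+2+a+b) \<noteq> 0" using ab by simp
  have tmk: "2 * c * ((-1)^(n-k) * Gt k) = T * ((-1) ^ (k + n) * jacobi_fun (n - 1) a b (t k))"
    if k: "1 \<le> k" "k \<le> n" for k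
  proof -
    define x where "x = t k"
    have xb: "-1 < x" "x < 1" using tb[OF k] unfolding x_def by auto
    have P0: "jacobiP (Suc m) a b x = 0" using zero_t[OF k] n unfolding x_def by simp
    have az: "((real m+a+b+2)*(2*real m+2+a+b))*((1-x^2)*jacobiP m (a+1) (b+1) x) = 4*(real m+1+a)*(real m+1+b)*jacobiP m a b x"
      using at_zero[OF ab(2) P0] by (simp add: algebra_simps)
    have p1: "(1-x) powr (a+1) = (1-x) powr a * (1-x)" using powr_p1[of "1-x" a] xb by simp
    have p2: "(1+x) powr (b+1) = (1+x) powr b * (1+x)" using powr_p1[of "1+x" b] xb by simp
    have Gx: "Gt k = w x * ((1-x^2)*jacobiP m (a+1) (b+1) x)"
      unfolding Gt_def x_def[symmetric] G_def w_def p1 p2 by (simp add: power2_eq_square algebra_simps)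
    have sg: "(-1::real)^(n-k) = (-1)^(k+n)"
    proof -
      have h: "k + n = (n - k) + 2*k" using k by simp
      show ?thesis unfolding h by (simp only: power_add power_mult) simp
    qed
    define q where "q = Cn / (real m + 1)"
    have twoc: "2 * c = q" unfolding c_def q_def
      by (simp add: field_simps add_pos_pos less_imp_neq[symmetric])
    have CI': "q * (4*(real m+1+a)*(real m+1+b)) = T * Cm * ((real m+a+b+2)*(2*real m+2+a+b))"
      unfolding q_def by (rule CI)
    have "((real m+a+b+2)*(2*real m+2+a+b)) * (2 * c * Gt k)
        = w x * (q * (((real m+a+b+2)*(2*real m+2+a+b))*((1-x^2)*jacobiP m (a+1) (b+1) x)))"
      unfolding Gx twoc by (simp add: algebra_simps)
    also have "\<dots> = w x * ((q * (4*(real m+1+a)*(real m+1+b))) * jacobiP m a b x)"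
      unfolding az by (simp add: algebra_simps)
    also have "\<dots> = ((real m+a+b+2)*(2*real m+2+a+b)) * (T * jacobi_fun (n - 1) a b x)"
      unfolding CI' fmdef by (simp add: algebra_simps)
    finally have "2 * c * Gt k = T * jacobi_fun (n - 1) a b x" using D0 by simp
    then show ?thesis unfolding x_def sg[symmetric] by (simp add: algebra_simps)
  qed
  have "(\<Sum>k=0..n. \<bar>F (v (Suc k)) - F (v k)\<bar>) = 2 * c * (\<Sum>k=1..n. (-1)^(n-k) * Gt k)"
    unfolding S1 S2 S3 S4 by simp
  also have "\<dots> = (\<Sum>k=1..n. 2 * c * ((-1)^(n-k) * Gt k))" by (simp add: sum_distrib_left)
  also have "\<dots> = (\<Sum>k=1..n. T * ((-1) ^ (k + n) * jacobi_fun (n - 1) a b (t k)))"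
    by (rule sum.cong) (simp_all add: tmk)
  also have "\<dots> = T * (\<Sum>k=1..n. (-1) ^ (k + n) * jacobi_fun (n - 1) a b (t k))"
    by (simp add: sum_distrib_left)
  finally show ?thesis using total unfolding T_def by simp
qed

end
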